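(* For $p\ge 1$ let $\Delta_p\subset\mathbf R^2$ be the rectangle with vertices $(0,0),(p,0),(p,1),(0,1)$, let $U_p=\{(a,b,c): a\mu_1+b\mu_2+c>0 \text{ on }\Delta_p\}$, and let $$E_p(a,b,c)=8\pi^2\,\frac{\left(\int_{\partial\Delta_p}(a\mu_1+b\mu_2+c)^{-2}\,d\sigma\right)^2}{\int_{\Delta_p}(a\mu_1+b\mu_2+c)^{-4}\,d\mu},$$ viewed as a function on $U_p/\mathbf R_+$. If $1\le p\le 2$, then $E_p$ has the unique critical point $[(0,0,1)]$. If $p>2$, then $E_p$ has exactly three critical points: $$[(0,0,1)],\qquad \left[\left(\pm1,\,0,\,\tfrac12\left(\tfrac{p^{3/2}}{\sqrt{p-2}}\mp p\right)\right)\right].$$ *)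

theory Defs
  imports "HOL-Analysis.Analysis"
begin

definition Delta :: "real \<Rightarrow> (real \<times> real) set" where
  "Delta p = cbox (0, 0) (p, 1)"

definition aff :: "real \<times> real \<times> real \<Rightarrow> real \<times> real \<Rightarrow> real" where
  "aff v q = fst v * fst q + fst (snd v) * snd q + snd (snd v)"

definition U :: "real \<Rightarrow> (real \<times> real \<times> real) set" where
  "U p = {v. \<forall>q\<in>Delta p. aff v q > 0}"

text \<open>Integral over the boundary of Delta_p w.r.t. the boundary measure d sigma
  (arc length on each of the four edges; all edge normals are primitive lattice
  vectors, so the toric boundary measure coincides with arc length).\<close>
definition bdry_integral :: "real \<Rightarrow> (real \<times> real \<Rightarrow> real) \<Rightarrow> real" where
  "bdry_integral p f =
     integral {0..p} (\<lambda>x. f (x, 0)) + integral {0..p} (\<lambda>x. f (x, 1)) +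
     integral {0..1} (\<lambda>y. f (0, y)) + integral {0..1} (\<lambda>y. f (p, y))"

definition E :: "real \<Rightarrow> real \<times> real \<times> real \<Rightarrow> real" where
  "E p v = 8 * pi ^ 2 * (bdry_integral p (\<lambda>q. 1 / (aff v q) ^ 2)) ^ 2
            / integral (Delta p) (\<lambda>q. 1 / (aff v q) ^ 4)"

definition critical_point :: "('a::real_normed_vector \<Rightarrow> real) \<Rightarrow> 'a \<Rightarrow> bool" where
  "critical_point f x \<longleftrightarrow> (f has_derivative (\<lambda>_. 0)) (at x)"

end

theory Submission
  imports Defs
begin


lemma ftc_real:
  fixes F f :: "real \<Rightarrow> real"
  assumes "a \<le> b" "\<And>x. x \<in> {a..b} \<Longrightarrow> (F has_real_derivative f x) (at x)"
  shows "integral {a..b} f = F b - F a"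
proof -
  have "(f has_integral (F b - F a)) {a..b}"
    apply (rule fundamental_theorem_of_calculus[OF assms(1)])
    using assms(2) by (auto simp: has_real_derivative_iff_has_vector_derivative[symmetric] intro: has_field_derivative_at_within)
  thus ?thesis by (rule integral_unique)
qed

lemma lin_pos:
  fixes s k L x :: real
  assumes "k > 0" "s*L+k > 0" "0 \<le> x" "x \<le> L"
  shows "s*x+k > 0"
proof (cases "s \<ge> 0")
  case True then show ?thesis using assms by (simp add: add_nonneg_pos)
next
  case False
  then have "s*x \<ge> s*L" using assms by (simp add: mult_left_mono_neg)
  then show ?thesis using assms by linarith
qed

lemma deriv_quot:
  fixes N D :: "real \<Rightarrow> real"
  assumes "(N has_real_derivative N') (at x)" "(D has_real_derivative D') (at x)" "D x \<noteq> 0"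
    "N' * D x - N x * D' = f * (D x)^2"
  shows "((\<lambda>x. N x / D x) has_real_derivative f) (at x)"
proof -
  have "((\<lambda>x. N x / D x) has_real_derivative (N' * D x - N x * D') / (D x * D x)) (at x)"
    by (rule DERIV_divide[OF assms(1,2,3)])
  moreover have "(N' * D x - N x * D') / (D x * D x) = f" using assms(3,4) by (simp add: power2_eq_square)
  ultimately show ?thesis by simp
qed

lemma pow_simp:
  fixes y c :: real
  assumes "y \<noteq> 0" "n \<le> 2*m"
  shows "1/y^n * (c * y^m)^2 = c^2 * y^(2*m - n)"
proof -
  have "(c * y^m)^2 = c^2 * (y^(2*m - n) * y^n)"
    using assms(2) by (simp add: power_mult_distrib power_mult[symmetric] power_add[symmetric] mult.commute)
  then show ?thesis using assms(1) by simp
qed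

lemma int2:
  fixes s k L :: real
  assumes "k > 0" "s * L+k > 0" "L \<ge> 0"
  shows "integral {0..L} (\<lambda>x. 1/(s * x+k)^2) = L/(k*(s * L+k))"
proof -
  have "integral {0..L} (\<lambda>x. 1/(s * x+k)^2) = (\<lambda>x. x/(k*(s * x+k))) L - (\<lambda>x. x/(k*(s * x+k))) 0"
  proof (rule ftc_real[OF assms(3)])
    fix x assume x: "x \<in> {0..L}"
    then have p: "s * x+k > 0" using lin_pos[OF assms(1,2)] by auto
    show "((\<lambda>x. x/(k*(s * x+k))) has_real_derivative 1/(s * x+k)^2) (at x)"
    proof (rule deriv_quot)
      show "((\<lambda>x. x) has_real_derivative 1) (at x)" by (rule derivative_eq_intros refl)+
      show "((\<lambda>x. k*(s * x+k)) has_real_derivative k * s) (at x)"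
        by (rule derivative_eq_intros refl)+ simp
      show "k*(s * x+k) \<noteq> 0" using p assms by simp
      have "1/(s * x+k)^2 * (k*(s * x+k))^2 = k^2" using p by (simp add: power_mult_distrib)
      then show "1 * (k*(s * x+k)) - x * (k * s) = 1/(s * x+k)^2 * (k*(s * x+k))^2"
        by (simp add: algebra_simps power2_eq_square)
    qed
  qed
  then show ?thesis by simp
qed

lemma int3:
  fixes s k L :: real
  assumes "k > 0" "s * L+k > 0" "L \<ge> 0"
  shows "integral {0..L} (\<lambda>x. 1/(s * x+k)^3) = L*(2*k+s * L)/(2*k^2*(s * L+k)^2)"
proof -
  have "integral {0..L} (\<lambda>x. 1/(s * x+k)^3) = (\<lambda>x. x*(2*k+s * x)/(2*k^2*(s * x+k)^2)) L - (\<lambda>x. x*(2*k+s * x)/(2*k^2*(s * x+k)^2)) 0"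
  proof (rule ftc_real[OF assms(3)])
    fix x assume x: "x \<in> {0..L}"
    then have p: "s * x+k > 0" using lin_pos[OF assms(1,2)] by auto
    show "((\<lambda>x. x*(2*k+s * x)/(2*k^2*(s * x+k)^2)) has_real_derivative 1/(s * x+k)^3) (at x)"
    proof (rule deriv_quot)
      show "((\<lambda>x. x*(2*k+s * x)) has_real_derivative (2*k + 2* s * x)) (at x)"
        by (rule derivative_eq_intros refl)+ (simp add: algebra_simps)
      show "((\<lambda>x. 2*k^2*(s * x+k)^2) has_real_derivative 4*k^2* s*(s * x+k)) (at x)"
        by (rule derivative_eq_intros refl)+ (simp add: algebra_simps)
      show "2*k^2*(s * x+k)^2 \<noteq> 0" using p assms by simp
      have "1/(s * x+k)^3 * (2*k^2*(s * x+k)^2)^2 = 4*k^4*(s * x+k)" using p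
        by (subst pow_simp) (auto simp: power_mult_distrib)
      moreover have "(2*k + 2* s * x) * (2*k^2*(s * x+k)^2) - x*(2*k+s * x) * (4*k^2* s*(s * x+k)) = 4*k^4*(s * x+k)"
        by algebra
      ultimately show "(2*k + 2* s * x) * (2*k^2*(s * x+k)^2) - x*(2*k+s * x) * (4*k^2* s*(s * x+k)) = 1/(s * x+k)^3 * (2*k^2*(s * x+k)^2)^2"
        by simp
    qed
  qed
  then show ?thesis by simp
qed

lemma int4:
  fixes s k L :: real
  assumes "k > 0" "s * L+k > 0" "L \<ge> 0"
  shows "integral {0..L} (\<lambda>x. 1/(s * x+k)^4) = L*(3*k^2+3*k*(s * L)+s^2*L^2)/(3*k^3*(s * L+k)^3)"
proof -
  have "integral {0..L} (\<lambda>x. 1/(s * x+k)^4) = (\<lambda>x. x*(3*k^2+3*k*(s * x)+s^2*x^2)/(3*k^3*(s * x+k)^3)) L - (\<lambda>x. x*(3*k^2+3*k*(s * x)+s^2*x^2)/(3*k^3*(s * x+k)^3)) 0"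
  proof (rule ftc_real[OF assms(3)])
    fix x assume x: "x \<in> {0..L}"
    then have p: "s * x+k > 0" using lin_pos[OF assms(1,2)] by auto
    show "((\<lambda>x. x*(3*k^2+3*k*(s * x)+s^2*x^2)/(3*k^3*(s * x+k)^3)) has_real_derivative 1/(s * x+k)^4) (at x)"
    proof (rule deriv_quot)
      show "((\<lambda>x. x*(3*k^2+3*k*(s * x)+s^2*x^2)) has_real_derivative (3*k^2+6*k* s * x+3* s^2*x^2)) (at x)"
        by (rule derivative_eq_intros refl)+ (simp add: algebra_simps power2_eq_square)
      show "((\<lambda>x. 3*k^3*(s * x+k)^3) has_real_derivative 9*k^3* s*(s * x+k)^2) (at x)"
        by (rule derivative_eq_intros refl)+ (simp add: algebra_simps)
      show "3*k^3*(s * x+k)^3 \<noteq> 0" using p assms by simp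
      have "1/(s * x+k)^4 * (3*k^3*(s * x+k)^3)^2 = 9*k^6*(s * x+k)^2" using p
        by (subst pow_simp) (auto simp: power_mult_distrib power_mult[symmetric])
      moreover have "(3*k^2+6*k* s * x+3* s^2*x^2) * (3*k^3*(s * x+k)^3) - x*(3*k^2+3*k*(s * x)+s^2*x^2) * (9*k^3* s*(s * x+k)^2) = 9*k^6*(s * x+k)^2"
        by algebra
      ultimately show "(3*k^2+6*k* s * x+3* s^2*x^2) * (3*k^3*(s * x+k)^3) - x*(3*k^2+3*k*(s * x)+s^2*x^2) * (9*k^3* s*(s * x+k)^2) = 1/(s * x+k)^4 * (3*k^3*(s * x+k)^3)^2"
        by simp
    qed
  qed
  then show ?thesis by simp
qed

lemma aff_eq: "aff (a,b,c) (x,y) = a*x + b*y + c" by (simp add: aff_def)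

lemma U_char:
  assumes "p \<ge> 0"
  shows "(a,b,c) \<in> U p \<longleftrightarrow> 0 < c \<and> 0 < a*p+c \<and> 0 < b+c \<and> 0 < a*p+b+c"
proof
  assume "(a,b,c) \<in> U p"
  then have h: "\<And>x y. 0 \<le> x \<Longrightarrow> x \<le> p \<Longrightarrow> 0 \<le> y \<Longrightarrow> y \<le> 1 \<Longrightarrow> a*x+b*y+c > 0"
  proof -
    fix x y :: real assume u: "(a,b,c) \<in> U p" and xy: "0 \<le> x" "x \<le> p" "0 \<le> y" "y \<le> 1"
    have "(x,y) \<in> Delta p" using xy by (simp add: Delta_def)
    then show "a*x+b*y+c > 0" using u by (auto simp: U_def aff_eq)
  qed
  show "0 < c \<and> 0 < a*p+c \<and> 0 < b+c \<and> 0 < a*p+b+c"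
    using h[of 0 0] h[of p 0] h[of 0 1] h[of p 1] assms by auto
next
  assume h: "0 < c \<and> 0 < a*p+c \<and> 0 < b+c \<and> 0 < a*p+b+c"
  show "(a,b,c) \<in> U p"
    unfolding U_def Delta_def
  proof (clarsimp simp: aff_eq)
    fix x y :: real assume xy: "0 \<le> x" "x \<le> p" "0 \<le> y" "y \<le> 1"
    have 1: "b*y+c > 0" using lin_pos[of c b 1 y] h xy by simp
    have 2: "b*y+(a*p+c) > 0" using lin_pos[of "a*p+c" b 1 y] h xy by (simp add: algebra_simps)
    have "a*x+(b*y+c) > 0" using lin_pos[of "b*y+c" a p x] 1 2 xy by (simp add: algebra_simps)
    then show "0 < a*x+b*y+c" by (simp add: algebra_simps)
  qed
qed



definition Lh :: "real \<Rightarrow> real \<Rightarrow> real \<Rightarrow> real \<Rightarrow> real" where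
  "Lh p a b c = (p+1)*(2*c+a*p+b)^2 + (p-1)*(b^2 - (a*p)^2)"
definition Qh :: "real \<Rightarrow> real \<Rightarrow> real \<Rightarrow> real \<Rightarrow> real" where
  "Qh p a b c = 3*(2*c+a*p+b)^4 - 2*(2*c+a*p+b)^2*((a*p)^2+b^2) - ((a*p)^2-b^2)^2"
definition Pv :: "real \<Rightarrow> real \<Rightarrow> real \<Rightarrow> real \<Rightarrow> real" where
  "Pv p a b c = c*(a*p+c)*(b+c)*(a*p+b+c)"

lemma bdry_closed:
  assumes p: "p \<ge> 1" and h: "0 < c" "0 < a*p+c" "0 < b+c" "0 < a*p+b+c"
  shows "bdry_integral p (\<lambda>q. 1/(aff (a,b,c) q)^2) = Lh p a b c / (2 * Pv p a b c)"
proof -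
  have e1: "(\<lambda>x. 1/(aff (a,b,c) (x,0))^2) = (\<lambda>x. 1/(a*x+c)^2)" by (simp add: aff_eq)
  have e2: "(\<lambda>x. 1/(aff (a,b,c) (x,1))^2) = (\<lambda>x. 1/(a*x+(b+c))^2)" by (simp add: aff_eq add.assoc)
  have e3: "(\<lambda>y. 1/(aff (a,b,c) (0,y))^2) = (\<lambda>y. 1/(b*y+c)^2)" by (simp add: aff_eq)
  have e4: "(\<lambda>y. 1/(aff (a,b,c) (p,y))^2) = (\<lambda>y. 1/(b*y+(a*p+c))^2)" by (simp add: aff_eq fun_eq_iff algebra_simps)
  have i1: "integral {0..p} (\<lambda>x. 1/(a*x+c)^2) = p/(c*(a*p+c))"
    using int2[of c a p] h p by simp
  have i2: "integral {0..p} (\<lambda>x. 1/(a*x+(b+c))^2) = p/((b+c)*(a*p+(b+c)))"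
    using int2[of "b+c" a p] h p by (simp add: algebra_simps)
  have i3: "integral {0..1} (\<lambda>y. 1/(b*y+c)^2) = 1/(c*(b+c))"
    using int2[of c b 1] h by simp
  have i4: "integral {0..1} (\<lambda>y. 1/(b*y+(a*p+c))^2) = 1/((a*p+c)*(a*p+b+c))"
    using int2[of "a*p+c" b 1] h by (simp add: algebra_simps)
  have "bdry_integral p (\<lambda>q. 1/(aff (a,b,c) q)^2) = p/(c*(a*p+c)) + p/((b+c)*(a*p+(b+c))) + 1/(c*(b+c)) + 1/((a*p+c)*(a*p+b+c))"
    unfolding bdry_integral_def e1 e2 e3 e4 i1 i2 i3 i4 by simp
  also have "\<dots> = Lh p a b c / (2 * Pv p a b c)"
  proof -
    have nz: "c \<noteq> 0" "a*p+c \<noteq> 0" "b+c \<noteq> 0" "a*p+b+c \<noteq> 0" "a*p+(b+c) \<noteq> 0" using h by auto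
    have "(p*((b+c)*(a*p+b+c)) + p*(c*(a*p+c)) + (a*p+c)*(a*p+b+c) + c*(b+c)) * 2 = Lh p a b c"
      unfolding Lh_def by algebra
    show ?thesis using nz unfolding Pv_def Lh_def
      apply (simp add: divide_simps)
      apply ((rule disjI2)+)?
      apply algebra done
  qed
  finally show ?thesis .
qed

lemma box_pos:
  fixes p :: real
  assumes p: "p \<ge> 0" and h: "0 < c" "0 < a*p+c" "0 < b+c" "0 < a*p+b+c"
    and xy: "0 \<le> x" "x \<le> p" "0 \<le> y" "y \<le> 1"
  shows "0 < a*x+b*y+c"
proof -
  have "(a,b,c) \<in> U p" using U_char[OF p] h by simp
  moreover have "(x,y) \<in> Delta p" using xy by (simp add: Delta_def)
  ultimately show ?thesis by (auto simp: U_def aff_eq)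
qed

lemma area_closed:
  assumes p: "p \<ge> 1" and h: "0 < c" "0 < a*p+c" "0 < b+c" "0 < a*p+b+c"
  shows "integral (Delta p) (\<lambda>q. 1/(aff (a,b,c) q)^4) = p * Qh p a b c / (48 * (Pv p a b c)^2)"
proof -
  have nz: "c \<noteq> 0" "a*p+c \<noteq> 0" "b+c \<noteq> 0" "a*p+b+c \<noteq> 0" "a*p+(b+c) \<noteq> 0" "b+(a*p+c) \<noteq> 0" "c+a*p \<noteq> 0" "b + (c+a*p) \<noteq> 0" "c + (b+a*p) \<noteq> 0" using h by (auto simp: algebra_simps)
  have pos: "\<And>x y. 0 \<le> x \<Longrightarrow> x \<le> p \<Longrightarrow> 0 \<le> y \<Longrightarrow> y \<le> 1 \<Longrightarrow> 0 < a*x+b*y+c"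
    using box_pos[OF _ h] p by auto
  have cont: "continuous_on (cbox (0,0) (p,1)) (\<lambda>q. 1/(aff (a,b,c) q)^4)"
    unfolding aff_def
    apply (intro continuous_intros)
    apply (clarsimp simp: cbox_Pair_eq)
    using pos by fastforce
  have "integral (Delta p) (\<lambda>q. 1/(aff (a,b,c) q)^4)
      = integral (cbox 0 p) (\<lambda>x. integral (cbox 0 1) (\<lambda>y. 1/(aff (a,b,c) (x,y))^4))"
    unfolding Delta_def by (rule integral_prod_continuous[OF cont])
  also have "\<dots> = integral {0..p} (\<lambda>x. (3*(a*x+c)^2 + 3*(a*x+c)*b + b^2)/(3*(a*x+c)^3*(b+(a*x+c))^3))"
  proof (simp only: cbox_interval, rule integral_cong)
    fix x assume x: "x \<in> {0..p}"
    have k: "0 < a*x+c" using pos[of x 0] x by auto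
    have k2: "0 < b*1+(a*x+c)" using pos[of x 1] x by auto
    have "(\<lambda>y. 1/(aff (a,b,c) (x,y))^4) = (\<lambda>y. 1/(b*y+(a*x+c))^4)"
      by (simp add: aff_eq fun_eq_iff algebra_simps)
    then show "integral {0..1} (\<lambda>y. 1/(aff (a,b,c) (x,y))^4) = (3*(a*x+c)^2 + 3*(a*x+c)*b + b^2)/(3*(a*x+c)^3*(b+(a*x+c))^3)"
      using int4[OF k k2] by simp
  qed
  also have "\<dots> = p * Qh p a b c / (48 * (Pv p a b c)^2)"
  proof (cases "b = 0")
    case True
    have "integral {0..p} (\<lambda>x. (3*(a*x+c)^2 + 3*(a*x+c)*b + b^2)/(3*(a*x+c)^3*(b+(a*x+c))^3))
        = integral {0..p} (\<lambda>x. 1/(a*x+c)^4)"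
    proof (rule integral_cong)
      fix x assume x: "x \<in> {0..p}"
      have k: "0 < a*x+c" using pos[of x 0] x by auto
      show "(3*(a*x+c)^2 + 3*(a*x+c)*b + b^2)/(3*(a*x+c)^3*(b+(a*x+c))^3) = 1/(a*x+c)^4"
        using k True by (simp add: divide_simps)
    qed
    also have "\<dots> = p*(3*c^2+3*c*(a*p)+a^2*p^2)/(3*c^3*(a*p+c)^3)"
      using int4[of c a p] h p by simp
    also have "\<dots> = p * Qh p a b c / (48 * (Pv p a b c)^2)"
      unfolding Qh_def Pv_def True
      apply (simp add: divide_simps nz[unfolded True] p)
      apply ((rule disjI2)+)?
      apply algebra done
    finally show ?thesis .
  next
    case False
    have "integral {0..p} (\<lambda>x. (3*(a*x+c)^2 + 3*(a*x+c)*b + b^2)/(3*(a*x+c)^3*(b+(a*x+c))^3))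
        = integral {0..p} (\<lambda>x. (1/(3*b)) * (1/(a*x+c)^3 - 1/(a*x+(b+c))^3))"
    proof (rule integral_cong)
      fix x assume x: "x \<in> {0..p}"
      have k: "0 < a*x+c" using pos[of x 0] x by auto
      have k2: "0 < a*x+(b+c)" using pos[of x 1] x by (auto simp: algebra_simps)
      show "(3*(a*x+c)^2 + 3*(a*x+c)*b + b^2)/(3*(a*x+c)^3*(b+(a*x+c))^3) = (1/(3*b)) * (1/(a*x+c)^3 - 1/(a*x+(b+c))^3)"
        using k k2 False by (simp add: divide_simps) algebra
    qed
    also have "\<dots> = (1/(3*b)) * (integral {0..p} (\<lambda>x. 1/(a*x+c)^3) - integral {0..p} (\<lambda>x. 1/(a*x+(b+c))^3))"
    proof -
      have c1: "continuous_on {0..p} (\<lambda>x. 1/(a*x+c)^3)"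
        apply (intro continuous_intros) using pos[of _ 0] by fastforce
      have c2: "continuous_on {0..p} (\<lambda>x. 1/(a*x+(b+c))^3)"
        apply (intro continuous_intros) using pos[of _ 1] by (fastforce simp: algebra_simps)
      show ?thesis
        using integral_diff[OF integrable_continuous_interval[OF c1] integrable_continuous_interval[OF c2]]
        by simp
    qed
    also have "\<dots> = (1/(3*b)) * (p*(2*c+a*p)/(2*c^2*(a*p+c)^2) - p*(2*(b+c)+a*p)/(2*(b+c)^2*(a*p+(b+c))^2))"
      using int3[of c a p] int3[of "b+c" a p] h p by (simp add: algebra_simps)
    also have "\<dots> = p * Qh p a b c / (48 * (Pv p a b c)^2)"
      unfolding Qh_def Pv_def
      apply (simp add: divide_simps nz False)
      apply ((rule disjI2)+)?
      apply algebra done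
    finally show ?thesis .
  qed
  finally show ?thesis .
qed



definition vA :: "real \<Rightarrow> real \<times> real \<times> real \<Rightarrow> real" where "vA p v = fst v * p"
definition vB :: "real \<times> real \<times> real \<Rightarrow> real" where "vB v = fst (snd v)"
definition vM :: "real \<Rightarrow> real \<times> real \<times> real \<Rightarrow> real" where "vM p v = 2 * snd (snd v) + fst v * p + fst (snd v)"

definition LL :: "real \<Rightarrow> real \<times> real \<times> real \<Rightarrow> real" where
  "LL p v = (p+1) *(vM p v)^2 + (p-1) *((vB v)^2 - (vA p v)^2)"
definition QQ :: "real \<Rightarrow> real \<times> real \<times> real \<Rightarrow> real" where
  "QQ p v = 3 *(vM p v)^4 - 2 *(vM p v)^2 *((vA p v)^2+(vB v)^2) - ((vA p v)^2-(vB v)^2)^2"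
definition DL :: "real \<Rightarrow> real \<times> real \<times> real \<Rightarrow> real \<times> real \<times> real \<Rightarrow> real" where
  "DL p v h = 2 *(p+1) * vM p v * vM p h + 2 *(p-1) *(vB v * vB h - vA p v * vA p h)"
definition DQ :: "real \<Rightarrow> real \<times> real \<times> real \<Rightarrow> real \<times> real \<times> real \<Rightarrow> real" where
  "DQ p v h = 12 *(vM p v)^3 * vM p h - 4 * vM p v * vM p h *((vA p v)^2+(vB v)^2)
     - 4 *(vM p v)^2 *(vA p v * vA p h + vB v * vB h) - 4 *((vA p v)^2-(vB v)^2) *(vA p v * vA p h - vB v * vB h)"

lemma vA_deriv: "(vA p has_derivative vA p) (at v)"
  unfolding vA_def[abs_def] by (rule derivative_eq_intros refl)+
lemma vB_deriv: "(vB has_derivative vB) (at v)"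
  unfolding vB_def[abs_def] by (rule derivative_eq_intros refl)+
lemma vM_deriv: "(vM p has_derivative vM p) (at v)"
  unfolding vM_def[abs_def] by (rule derivative_eq_intros refl)+ (simp add: algebra_simps)

lemma LL_deriv: "(LL p has_derivative DL p v) (at v)"
  unfolding LL_def[abs_def]
  apply (rule has_derivative_eq_rhs)
   apply (rule derivative_intros vA_deriv vB_deriv vM_deriv)+
  apply (rule ext)
  apply (simp add: DL_def)
  apply (algebra)?
  done

lemma QQ_deriv: "(QQ p has_derivative DQ p v) (at v)"
  unfolding QQ_def[abs_def]
  apply (rule has_derivative_eq_rhs)
   apply (rule derivative_intros vA_deriv vB_deriv vM_deriv)+
  apply (rule ext)
  apply (simp add: DQ_def)
  apply (algebra)?
  done

definition RR :: "real \<Rightarrow> real \<times> real \<times> real \<Rightarrow> real" where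
  "RR p v = (96 * pi^2 *(LL p v * LL p v)) / (p * QQ p v)"
definition Ga :: "real \<Rightarrow> real \<times> real \<times> real \<Rightarrow> real" where
  "Ga p v = 2 * QQ p v *(-2 *(p-1) * vA p v) - LL p v *(-4 *(vM p v)^2 * vA p v - 4 * vA p v *((vA p v)^2-(vB v)^2))"
definition Gb :: "real \<Rightarrow> real \<times> real \<times> real \<Rightarrow> real" where
  "Gb p v = 2 * QQ p v *(2 *(p-1) * vB v) - LL p v *(-4 *(vM p v)^2 * vB v + 4 * vB v *((vA p v)^2-(vB v)^2))"
definition Gm :: "real \<Rightarrow> real \<times> real \<times> real \<Rightarrow> real" where
  "Gm p v = 2 * QQ p v *(2 *(p+1) * vM p v) - LL p v *(12 *(vM p v)^3 - 4 * vM p v *((vA p v)^2+(vB v)^2))"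

lemma key_id: "2 * QQ p v * DL p v h - LL p v * DQ p v h = vA p h * Ga p v + vB h * Gb p v + vM p h * Gm p v"
  unfolding DL_def DQ_def Ga_def Gb_def Gm_def by algebra

lemma RR_deriv:
  assumes "QQ p v \<noteq> 0" "p \<noteq> 0"
  shows "(RR p has_derivative (\<lambda>h. 96 * pi^2 * LL p v *(vA p h * Ga p v + vB h * Gb p v + vM p h * Gm p v)/(p *(QQ p v)^2))) (at v)"
  unfolding RR_def[abs_def]
  apply (rule has_derivative_eq_rhs)
   apply (rule has_derivative_divide'[OF has_derivative_mult_right[OF has_derivative_mult[OF LL_deriv LL_deriv]] has_derivative_mult_right[OF QQ_deriv]])
   apply (simp add: assms)
proof (rule ext)
  fix h
  have num: "96 * pi^2 *(LL p v * DL p v h + DL p v h * LL p v) *(p * QQ p v) - 96 * pi^2 *(LL p v * LL p v) *(p * DQ p v h)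
     = (96 * pi^2 * LL p v *(vA p h * Ga p v + vB h * Gb p v + vM p h * Gm p v)) * p"
    using key_id[of p v h] by algebra
  show "(96 * pi^2 *(LL p v * DL p v h + DL p v h * LL p v) *(p * QQ p v) - 96 * pi^2 *(LL p v * LL p v) *(p * DQ p v h)) / ((p * QQ p v) *(p * QQ p v))
     = 96 * pi^2 * LL p v *(vA p h * Ga p v + vB h * Gb p v + vM p h * Gm p v)/(p *(QQ p v)^2)"
    unfolding num using assms by (simp add: power2_eq_square field_simps)
qed



lemma crit_iff:
  assumes S: "open S" "v \<in> S" "\<And>w. w \<in> S \<Longrightarrow> E p w = RR p w"
    and nz: "QQ p v \<noteq> 0" "p \<noteq> 0" "LL p v \<noteq> 0"
  shows "critical_point (E p) v \<longleftrightarrow> Ga p v = 0 \<and> Gb p v = 0 \<and> Gm p v = 0"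
proof -
  have eq: "critical_point (E p) v \<longleftrightarrow> (RR p has_derivative (\<lambda>_. 0)) (at v)"
  proof
    assume "critical_point (E p) v"
    then have "(E p has_derivative (\<lambda>_. 0)) (at v)" by (simp add: critical_point_def)
    then show "(RR p has_derivative (\<lambda>_. 0)) (at v)"
      by (rule has_derivative_transform_within_open[OF _ S(1) S(2)]) (simp add: S(3))
  next
    assume "(RR p has_derivative (\<lambda>_. 0)) (at v)"
    then have "(E p has_derivative (\<lambda>_. 0)) (at v)"
      by (rule has_derivative_transform_within_open[OF _ S(1) S(2)]) (simp add: S(3))
    then show "critical_point (E p) v" by (simp add: critical_point_def)
  qed
  define K where "K = 96 * pi^2 * LL p v / (p * (QQ p v)^2)"
  have K: "K \<noteq> 0" using nz by (simp add: K_def)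
  have d: "(RR p has_derivative (\<lambda>h. K * (vA p h * Ga p v + vB h * Gb p v + vM p h * Gm p v))) (at v)"
    using RR_deriv[OF nz(1,2)] by (simp add: K_def)
  show ?thesis
  proof
    assume "critical_point (E p) v"
    then have "(RR p has_derivative (\<lambda>_. 0)) (at v)" using eq by simp
    then have D0: "(\<lambda>h. K * (vA p h * Ga p v + vB h * Gb p v + vM p h * Gm p v)) = (\<lambda>_. 0)"
      using has_derivative_unique d by blast
    have "K * (vA p (1/p, 0, -1/2) * Ga p v + vB (1/p, 0, -1/2) * Gb p v + vM p (1/p, 0, -1/2) * Gm p v) = 0"
      using fun_cong[OF D0, of "(1/p, 0, -1/2)"] by simp
    then have 1: "Ga p v = 0" using K nz by (simp add: vA_def vB_def vM_def)
    have "K * (vA p (0, 1, -1/2) * Ga p v + vB (0, 1, -1/2) * Gb p v + vM p (0, 1, -1/2) * Gm p v) = 0"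
      using fun_cong[OF D0, of "(0, 1, -1/2)"] by simp
    then have 2: "Gb p v = 0" using K nz by (simp add: vA_def vB_def vM_def)
    have "K * (vA p (0, 0, 1/2) * Ga p v + vB (0, 0, 1/2) * Gb p v + vM p (0, 0, 1/2) * Gm p v) = 0"
      using fun_cong[OF D0, of "(0, 0, 1/2)"] by simp
    then have 3: "Gm p v = 0" using K nz by (simp add: vA_def vB_def vM_def)
    show "Ga p v = 0 \<and> Gb p v = 0 \<and> Gm p v = 0" using 1 2 3 by simp
  next
    assume "Ga p v = 0 \<and> Gb p v = 0 \<and> Gm p v = 0"
    then have "(RR p has_derivative (\<lambda>_. 0)) (at v)" using d by simp
    then show "critical_point (E p) v" using eq by simp
  qed
qed

lemma QL_pos:
  fixes A B M p :: real
  assumes "M-A-B > 0" "M+A-B > 0" "M-A+B > 0" "M+A+B > 0" "p \<ge> 1"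
  shows "3 * M^4 - 2 * M^2 * (A^2+B^2) - (A^2-B^2)^2 > 0"
    and "(p+1) * M^2 + (p-1) * (B^2-A^2) > 0"
    and "A^2 + B^2 < M^2"
proof -
  have u: "\<bar>A\<bar> + \<bar>B\<bar> < M" using assms by (auto simp: abs_if)
  have M: "M > 0" using u by linarith
  have "(\<bar>A\<bar> + \<bar>B\<bar>)^2 < M^2" using u by (intro power_strict_mono) auto
  moreover have "A^2 + B^2 \<le> (\<bar>A\<bar> + \<bar>B\<bar>)^2"
    by (simp add: power2_eq_square algebra_simps)
  ultimately show s1: "A^2 + B^2 < M^2" by linarith
  have "\<bar>A^2 - B^2\<bar> \<le> A^2 + B^2" by (simp add: abs_if)
  then have "\<bar>A^2 - B^2\<bar> < M^2" using s1 by linarith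
  then have "\<bar>A^2 - B^2\<bar>^2 < (M^2)^2" by (intro power_strict_mono) auto
  then have s2: "(A^2 - B^2)^2 < M^4" by (simp add: power_mult[symmetric])
  have "M^2 * (A^2+B^2) < M^2 * M^2" using s1 M by (intro mult_strict_left_mono) auto
  then show "3 * M^4 - 2 * M^2 * (A^2+B^2) - (A^2-B^2)^2 > 0"
    using s2 by (simp add: power4_eq_xxxx power2_eq_square)
  have "A^2 \<le> M^2" using s1 by (smt (verit) zero_le_power2)
  then have "(p-1) * A^2 \<le> (p-1) * M^2" using assms(5) by (intro mult_left_mono) auto
  moreover have "(p-1) * B^2 \<ge> 0" using assms(5) by simp
  moreover have "M^2 > 0" using M by simp
  moreover have "(p+1) * M^2 + (p-1) * (B^2-A^2) = 2*M^2 + ((p-1) * M^2 - (p-1) * A^2) + (p-1) * B^2"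
    by (simp add: algebra_simps)
  ultimately show "(p+1) * M^2 + (p-1) * (B^2-A^2) > 0" by linarith
qed



lemma U_eq: "p \<ge> 0 \<Longrightarrow> U p = {v. 0 < snd (snd v) \<and> 0 < fst v * p + snd (snd v) \<and> 0 < fst (snd v) + snd (snd v) \<and> 0 < fst v * p + fst (snd v) + snd (snd v)}"
  using U_char by (auto simp: mult.commute)

lemma U_open: "p \<ge> 0 \<Longrightarrow> open (U p)"
  unfolding U_eq
  by (intro open_Collect_conj open_Collect_less continuous_intros)

lemma LL_eq: "LL p (a,b,c) = Lh p a b c"
  unfolding LL_def Lh_def vA_def vB_def vM_def by (simp add: algebra_simps)
lemma QQ_eq: "QQ p (a,b,c) = Qh p a b c"
  unfolding QQ_def Qh_def vA_def vB_def vM_def by (simp add: algebra_simps)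

lemma pos_facts:
  assumes p: "p \<ge> 1" and h: "0 < c" "0 < a * p + c" "0 < b + c" "0 < a * p + b + c"
  shows "Qh p a b c > 0" "Lh p a b c > 0" "(a * p)^2 + b^2 < (2 * c + a * p + b)^2"
  using QL_pos[of "2 * c + a * p + b" "a * p" b p] h p unfolding Qh_def Lh_def by auto

lemma E_RR:
  assumes p: "p \<ge> 1" and w: "w \<in> U p"
  shows "E p w = RR p w"
proof -
  obtain a b c where wd: "w = (a,b,c)" by (cases w) auto
  have h: "0 < c" "0 < a * p + c" "0 < b + c" "0 < a * p + b + c"
    using w U_char[of p a b c] p unfolding wd by auto
  have Q: "Qh p a b c > 0" using pos_facts[OF p h] by simp
  have P: "Pv p a b c \<noteq> 0" using h unfolding Pv_def by auto
  have "E p w = 8 * pi^2 * (Lh p a b c / (2 * Pv p a b c))^2 / (p * Qh p a b c / (48 * (Pv p a b c)^2))"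
    unfolding E_def wd bdry_closed[OF p h] area_closed[OF p h] by simp
  also have "\<dots> = RR p w"
    unfolding RR_def wd LL_eq QQ_eq using P Q p by (simp add: field_simps power2_eq_square)
  finally show ?thesis .
qed

lemma Ga_fac: "Ga p v = 4 * vA p v * (LL p v * ((vM p v)^2 + (vA p v)^2 - (vB v)^2) - (p-1) * QQ p v)"
  unfolding Ga_def by algebra
lemma Gb_fac: "Gb p v = 4 * vB v * ((p-1) * QQ p v + LL p v * ((vM p v)^2 - (vA p v)^2 + (vB v)^2))"
  unfolding Gb_def by algebra
lemma euler: "vA p v * Ga p v + vB v * Gb p v + vM p v * Gm p v = 0"
  unfolding Ga_def Gb_def Gm_def LL_def QQ_def by algebra
lemma br: "((p+1) * M^2 - (p-1) * A^2) * (M^2+A^2) - (p-1) * (3 * M^4 - 2 * M^2 * A^2 - A^4) = 2 * M^2 * ((2-p) * M^2+p * A^2)" for p M A :: real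
  by algebra
lemma bracket_B0: "vB v = 0 \<Longrightarrow> LL p v * ((vM p v)^2 + (vA p v)^2) - (p-1) * QQ p v = 2 * (vM p v)^2 * ((2-p) * (vM p v)^2 + p * (vA p v)^2)"
  unfolding LL_def QQ_def apply simp by (rule br)

lemma crit_char:
  assumes p: "p \<ge> 1" and v: "(a,b,c) \<in> U p"
  shows "critical_point (E p) (a,b,c) \<longleftrightarrow> b = 0 \<and> (a = 0 \<or> (2-p) * (2 * c + a * p)^2 + p * (a * p)^2 = 0)"
proof -
  let ?v = "(a,b,c)"
  have h: "0 < c" "0 < a * p + c" "0 < b + c" "0 < a * p + b + c"
    using v U_char[of p a b c] p by auto
  have Q: "QQ p ?v > 0" and L: "LL p ?v > 0" and s: "(a * p)^2 + b^2 < (2 * c + a * p + b)^2"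
    using pos_facts[OF p h] unfolding LL_eq QQ_eq by auto
  have A: "vA p ?v = a * p" and B: "vB ?v = b" and M: "vM p ?v = 2 * c + a * p + b"
    by (simp_all add: vA_def vB_def vM_def)
  have Mpos: "vM p ?v > 0" unfolding M using h by linarith
  have ci: "critical_point (E p) ?v \<longleftrightarrow> Ga p ?v = 0 \<and> Gb p ?v = 0 \<and> Gm p ?v = 0"
    by (rule crit_iff[OF U_open v E_RR]) (use p Q L in auto)
  have bpos: "(p-1) * QQ p ?v + LL p ?v * ((vM p ?v)^2 - (vA p ?v)^2 + (vB ?v)^2) > 0"
  proof -
    have "(vM p ?v)^2 - (vA p ?v)^2 + (vB ?v)^2 > 0" using s unfolding A B M
      by (smt (verit) zero_le_power2)
    then have "LL p ?v * ((vM p ?v)^2 - (vA p ?v)^2 + (vB ?v)^2) > 0" using L by simp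
    moreover have "(p-1) * QQ p ?v \<ge> 0" using p Q by simp
    ultimately show ?thesis by linarith
  qed
  show ?thesis
  proof
    assume "critical_point (E p) ?v"
    then have G: "Ga p ?v = 0" "Gb p ?v = 0" using ci by auto
    have b0: "b = 0" using G(2) bpos unfolding Gb_fac B by simp
    then have vB0: "vB ?v = 0" using B by simp
    have "4 * vA p ?v * (2 * (vM p ?v)^2 * ((2-p) * (vM p ?v)^2 + p * (vA p ?v)^2)) = 0"
      using G(1) unfolding Ga_fac bracket_B0[OF vB0, symmetric] using vB0 by simp
    then have "vA p ?v = 0 \<or> (2-p) * (vM p ?v)^2 + p * (vA p ?v)^2 = 0" using Mpos by simp
    then show "b = 0 \<and> (a = 0 \<or> (2-p) * (2 * c + a * p)^2 + p * (a * p)^2 = 0)"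
      using b0 p unfolding A M by auto
  next
    assume H: "b = 0 \<and> (a = 0 \<or> (2-p) * (2 * c + a * p)^2 + p * (a * p)^2 = 0)"
    then have vB0: "vB ?v = 0" using B by simp
    have Gb0: "Gb p ?v = 0" unfolding Gb_fac vB0 by simp
    have "vA p ?v = 0 \<or> (2-p) * (vM p ?v)^2 + p * (vA p ?v)^2 = 0"
      using H unfolding A M by auto
    then have Ga0: "Ga p ?v = 0"
      unfolding Ga_fac using bracket_B0[OF vB0] vB0 by auto
    have "vM p ?v * Gm p ?v = 0" using euler[of p ?v] Ga0 Gb0 by simp
    then have "Gm p ?v = 0" using Mpos by simp
    then show "critical_point (E p) ?v" using ci Ga0 Gb0 by simp
  qed
qed



lemma crit_set:
  assumes p: "p \<ge> 1"
  shows "(v \<in> U p \<and> critical_point (E p) v) \<longleftrightarrow>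
    (\<exists>a c. v = (a,0,c) \<and> 0 < c \<and> 0 < a * p + c \<and> (a = 0 \<or> (2-p) * (2 * c + a * p)^2 + p * (a * p)^2 = 0))"
proof -
  obtain a b c where vd: "v = (a,b,c)" by (cases v) auto
  have U: "(a,b,c) \<in> U p \<longleftrightarrow> 0 < c \<and> 0 < a * p+c \<and> 0 < b+c \<and> 0 < a * p+b+c" using U_char p by simp
  show ?thesis
  proof
    assume "v \<in> U p \<and> critical_point (E p) v"
    then have u: "(a,b,c) \<in> U p" and cr: "critical_point (E p) (a,b,c)" using vd by auto
    have "b = 0 \<and> (a = 0 \<or> (2-p) * (2 * c + a * p)^2 + p * (a * p)^2 = 0)" using crit_char[OF p u] cr by simp
    then show "\<exists>a c. v = (a,0,c) \<and> 0 < c \<and> 0 < a * p + c \<and> (a = 0 \<or> (2-p) * (2 * c + a * p)^2 + p * (a * p)^2 = 0)"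
      using u U vd by auto
  next
    assume "\<exists>a c. v = (a,0,c) \<and> 0 < c \<and> 0 < a * p + c \<and> (a = 0 \<or> (2-p) * (2 * c + a * p)^2 + p * (a * p)^2 = 0)"
    then obtain a' c' where H: "v = (a',0,c')" "0 < c'" "0 < a' * p + c'" "a' = 0 \<or> (2-p) * (2 * c' + a' * p)^2 + p * (a' * p)^2 = 0" by blast
    have u: "(a',0,c') \<in> U p" using U_char[of p a' 0 c'] p H by simp
    have "critical_point (E p) (a',0,c')" using crit_char[OF p u] H by simp
    then show "v \<in> U p \<and> critical_point (E p) v" using u H by simp
  qed
qed

lemma r_facts:
  fixes p :: real
  assumes "p > 2"
  defines "r \<equiv> sqrt p / sqrt (p-2)"
  shows "r > 1" "r^2 = p/(p-2)" "p powr (3/2) / sqrt (p-2) = p * r"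
proof -
  have s: "sqrt (p-2) > 0" "sqrt p > 0" using assms by auto
  show r2: "r^2 = p/(p-2)" using assms by (simp add: r_def power_divide)
  have "p/(p-2) > 1" using assms by simp
  then have "r^2 > 1^2" using r2 by simp
  moreover have "r \<ge> 0" using s by (simp add: r_def)
  ultimately show "r > 1" using power_less_imp_less_base by blast
  have "p powr (3/2) = p powr (1 + 1/2)" by simp
  also have "\<dots> = p powr 1 * p powr (1/2)" by (rule powr_add)
  also have "\<dots> = p * sqrt p" using assms by (simp add: powr_half_sqrt)
  finally show "p powr (3/2) / sqrt (p-2) = p * r" by (simp add: r_def)
qed

theorem mainTheorem4:
  fixes p :: real
  assumes "p \<ge> 1"
  shows "(p \<le> 2 \<longrightarrow>
            {v \<in> U p. critical_point (E p) v} = {t *\<^sub>R (0, 0, 1) | t. t > 0})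
       \<and> (p > 2 \<longrightarrow>
            {v \<in> U p. critical_point (E p) v} =
              {t *\<^sub>R (0, 0, 1) | t. t > 0}
              \<union> {t *\<^sub>R (1, 0, (p powr (3/2) / sqrt (p - 2) - p) / 2) | t. t > 0}
              \<union> {t *\<^sub>R (-1, 0, (p powr (3/2) / sqrt (p - 2) + p) / 2) | t. t > 0})"
proof -
  have p0: "p > 0" using assms by simp
  let ?S = "{v \<in> U p. critical_point (E p) v}"
  have S: "\<And>v. v \<in> ?S \<longleftrightarrow> (\<exists>a c. v = (a,0,c) \<and> 0 < c \<and> 0 < a * p + c \<and> (a = 0 \<or> (2-p) * (2 * c + a * p)^2 + p * (a * p)^2 = 0))"
    using crit_set[OF assms] by simp
  have sc: "\<And>t x y z. t *\<^sub>R ((x,y,z)::real\<times>real\<times>real) = (t * x, t * y, t * z)" by simp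
  have zc: "p > 2" if "0 < c" "0 < a * p + c" "(2-p) * (2 * c + a * p)^2 + p * (a * p)^2 = 0" "a \<noteq> 0" for a c
  proof (rule ccontr)
    assume "\<not> p > 2"
    then have "(2-p) * (2 * c + a * p)^2 \<ge> 0" by simp
    moreover have "p * (a * p)^2 > 0" using that(4) p0 by simp
    ultimately show False using that(3) by linarith
  qed
  show ?thesis
  proof (intro conjI impI)
    assume p2: "p \<le> 2"
    show "?S = {t *\<^sub>R (0, 0, 1) | t. t > 0}"
    proof (intro set_eqI iffI)
      fix v :: "real \<times> real \<times> real" assume "v \<in> ?S"
      then obtain a c where H: "v = (a,0,c)" "0 < c" "0 < a * p + c" "a = 0 \<or> (2-p) * (2 * c + a * p)^2 + p * (a * p)^2 = 0"
        using S by blast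
      have "a = 0" using H zc p2 by force
      then have "v = c *\<^sub>R (0,0,1)" using H by simp
      then show "v \<in> {t *\<^sub>R (0, 0, 1) | t. t > 0}" using H by blast
    next
      fix v :: "real \<times> real \<times> real" assume "v \<in> {t *\<^sub>R (0, 0, 1) | t. t > 0}"
      then obtain t where t: "t > 0" "v = (0,0,t)" by auto
      then show "v \<in> ?S" using S by auto
    qed
  next
    assume p2: "p > 2"
    define r where "r = sqrt p / sqrt (p-2)"
    have r: "r > 1" "r^2 = p/(p-2)" "p powr (3/2) / sqrt (p-2) = p * r" using r_facts[OF p2] by (simp_all add: r_def)
    have key: "(2-p) * (2 * c + a * p)^2 + p * (a * p)^2 = 0 \<longleftrightarrow> 2 * c + a * p = r * \<bar>a * p\<bar>"
      if "0 < c" "0 < a * p + c" for a c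
    proof
      assume h: "(2-p) * (2 * c + a * p)^2 + p * (a * p)^2 = 0"
      have "(2 * c + a * p)^2 = p/(p-2) * (a * p)^2" using h p2 by (simp add: field_simps)
      also have "\<dots> = (r * \<bar>a * p\<bar>)^2" using r(2) by (simp add: power_mult_distrib)
      finally have "(2 * c + a * p)^2 = (r * \<bar>a * p\<bar>)^2" .
      moreover have "2 * c + a * p \<ge> 0" using that by linarith
      moreover have "r * \<bar>a * p\<bar> \<ge> 0" using r(1) by simp
      ultimately show "2 * c + a * p = r * \<bar>a * p\<bar>" using power2_eq_imp_eq by blast
    next
      assume h: "2 * c + a * p = r * \<bar>a * p\<bar>"
      have "(2 * c + a * p)^2 = p/(p-2) * (a * p)^2" unfolding h using r(2) by (simp add: power_mult_distrib)
      then show "(2-p) * (2 * c + a * p)^2 + p * (a * p)^2 = 0" using p2 by (simp add: field_simps)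
    qed
    have rp: "p * r - p > 0" using r(1) p0 by (simp add: algebra_simps)
    show "?S = {t *\<^sub>R (0, 0, 1) | t. t > 0}
              \<union> {t *\<^sub>R (1, 0, (p powr (3/2) / sqrt (p - 2) - p) / 2) | t. t > 0}
              \<union> {t *\<^sub>R (-1, 0, (p powr (3/2) / sqrt (p - 2) + p) / 2) | t. t > 0}"
      unfolding r(3)
    proof (intro set_eqI iffI)
      fix v :: "real \<times> real \<times> real" assume "v \<in> ?S"
      then obtain a c where H: "v = (a,0,c)" "0 < c" "0 < a * p + c" "a = 0 \<or> (2-p) * (2 * c + a * p)^2 + p * (a * p)^2 = 0"
        using S by blast
      consider "a = 0" | "a > 0" "2 * c + a * p = r * \<bar>a * p\<bar>" | "a < 0" "2 * c + a * p = r * \<bar>a * p\<bar>"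
        using H key[OF H(2,3)] by (cases "a = 0"; cases "a > 0") auto
      then show "v \<in> {t *\<^sub>R (0, 0, 1) | t. t > 0}
              \<union> {t *\<^sub>R (1, 0, (p * r - p) / 2) | t. t > 0}
              \<union> {t *\<^sub>R (-1, 0, (p * r + p) / 2) | t. t > 0}"
      proof cases
        case 1
        then have "v = c *\<^sub>R (0,0,1)" using H by simp
        then show ?thesis using H by blast
      next
        case 2
        then have "\<bar>a * p\<bar> = a * p" using p0 by simp
        then have "c = a * ((p * r - p) / 2)" using 2 by (simp add: algebra_simps)
        then have "v = a *\<^sub>R (1, 0, (p * r - p) / 2)" using H by simp
        then show ?thesis using 2 by blast
      next
        case 3
        then have "\<bar>a * p\<bar> = - a * p" using p0 by (simp add: abs_if mult_neg_pos)
        then have "c = (-a) * ((p * r + p) / 2)" using 3 by (simp add: algebra_simps)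
        then have "v = (-a) *\<^sub>R (-1, 0, (p * r + p) / 2)" using H by simp
        moreover have "-a > 0" using 3 by simp
        ultimately show ?thesis by blast
      qed
    next
      fix v :: "real \<times> real \<times> real" assume "v \<in> {t *\<^sub>R (0, 0, 1) | t. t > 0}
              \<union> {t *\<^sub>R (1, 0, (p * r - p) / 2) | t. t > 0}
              \<union> {t *\<^sub>R (-1, 0, (p * r + p) / 2) | t. t > 0}"
      then consider t where "t > 0" "v = (0,0,t)" | t where "t > 0" "v = (t, 0, t * ((p * r - p) / 2))"
        | t where "t > 0" "v = (-t, 0, t * ((p * r + p) / 2))" by auto
      then show "v \<in> ?S"
      proof cases
        case 1
        then show ?thesis using S by auto
      next
        case 2
        have c: "0 < t * ((p * r - p) / 2)" using 2 rp by simp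
        have ac: "0 < t * p + t * ((p * r - p) / 2)" using 2 rp p0 by (simp add: add_pos_pos)
        have "2 * (t * ((p * r - p) / 2)) + t * p = r * \<bar>t * p\<bar>" using 2 p0 by (simp add: field_simps abs_mult)
        then have "(2-p) * (2 * (t * ((p * r - p) / 2)) + t * p)^2 + p * (t * p)^2 = 0" using key[OF c ac] by simp
        then show ?thesis using S 2 c ac by blast
      next
        case 3
        have c: "0 < t * ((p * r + p) / 2)" using 3 rp p0 by (intro mult_pos_pos) (simp_all add: add_pos_pos)
        have e: "-t * p + t * ((p * r + p) / 2) = t * ((p * r - p) / 2)" by (simp add: algebra_simps)
        have ac: "0 < -t * p + t * ((p * r + p) / 2)" unfolding e using 3 rp by simp
        have "2 * (t * ((p * r + p) / 2)) + -t * p = r * \<bar>-t * p\<bar>" using 3 p0 by (simp add: field_simps abs_mult)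
        then have "(2-p) * (2 * (t * ((p * r + p) / 2)) + -t * p)^2 + p * (-t * p)^2 = 0" using key[OF c ac] by simp
        then show ?thesis using S 3 c ac by blast
      qed
    qed
  qed
qed

end
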